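(* Let $p$ be an odd prime, $q=p^m$, $q=et+1$ with integers $e\geq 2,t\geq 1$, $R_{e,q}=\mathbb{F}_q[u]/\langle u^e-1\rangle$ with orthogonal idempotents $\mu_1,\dots,\mu_e$ (see context), and assume $\gcd(n,q)=1$. Let $\mathcal{C}=\bigoplus_{i=1}^e\mu_i\mathcal{C}_i$ be a cyclic code of length $n$ over $R_{e,q}$, where $\mathcal{C}_i=\langle g_i(x)\rangle$ is a cyclic code of length $n$ over $\mathbb{F}_q$ with $g_i(x)$ a monic divisor of $x^n-1$, for $1\leq i\leq e$. Then $\mathcal{C}$ is an LCD code if and only if $g_i(x)$ is a self-reciprocal polynomial over $\mathbb{F}_q$ for every $1\leq i\leq e$.
   Context: Write $u^e-1=\prod_{i=1}^e(u-\alpha_i)$ over $\mathbb{F}_q$, $G_i=u-\alpha_i$, $\widehat{G}_i=(u^e-1)/G_i$, $z_iG_i+h_i\widehat{G}_i=1$, $\mu_i=h_i\widehat{G}_i$; these are pairwise orthogonal idempotents summing to $1$. For a linear code $\mathcal{C}\subseteq R_{e,q}^n$, $\mathcal{C}_i=\{s_i\in\mathbb{F}_q^n:\exists\, s_j\ (j\neq i)\text{ with }\sum_{j}s_j\mu_j\in\mathcal{C}\}$ and $\mathcal{C}=\bigoplus_i\mu_i\mathcal{C}_i$. A code is LCD if $\mathcal{C}\cap\mathcal{C}^\perp=\{0\}$ (Euclidean dual). A polynomial $g$ is self-reciprocal if $x^{\deg g}g(1/x)$ equals $g$ up to a nonzero scalar. *)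

theory Defs
  imports "HOL-Computational_Algebra.Computational_Algebra"
begin

text \<open>The ring R_{e,q} = F_q[u]/(u^e - 1): elements are represented by polynomials
  reduced modulo u^e - 1.\<close>

definition ue1 :: "nat \<Rightarrow> 'a::field poly" where
  "ue1 e = monom 1 e - 1"

definition Rmod :: "nat \<Rightarrow> 'a::field poly \<Rightarrow> 'a poly" where
  "Rmod e f = f mod ue1 e"

definition Gpol :: "(nat \<Rightarrow> 'a::field) \<Rightarrow> nat \<Rightarrow> 'a poly" where
  "Gpol \<alpha> i = [:- \<alpha> i, 1:]"

definition Ghat :: "nat \<Rightarrow> (nat \<Rightarrow> 'a::field) \<Rightarrow> nat \<Rightarrow> 'a poly" where
  "Ghat e \<alpha> i = ue1 e div Gpol \<alpha> i"

definition hpol :: "nat \<Rightarrow> (nat \<Rightarrow> 'a::field) \<Rightarrow> nat \<Rightarrow> 'a poly" where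
  "hpol e \<alpha> i = (SOME h. \<exists>z. z * Gpol \<alpha> i + h * Ghat e \<alpha> i = 1)"

definition mu :: "nat \<Rightarrow> (nat \<Rightarrow> 'a::field) \<Rightarrow> nat \<Rightarrow> 'a poly" where
  "mu e \<alpha> i = Rmod e (hpol e \<alpha> i * Ghat e \<alpha> i)"

definition Rvecs :: "nat \<Rightarrow> nat \<Rightarrow> (nat \<Rightarrow> 'a::field poly) set" where
  "Rvecs e n = {v. (\<forall>j. Rmod e (v j) = v j) \<and> (\<forall>j\<ge>n. v j = 0)}"

definition Rinner :: "nat \<Rightarrow> nat \<Rightarrow> (nat \<Rightarrow> 'a::field poly) \<Rightarrow> (nat \<Rightarrow> 'a poly) \<Rightarrow> 'a poly" where
  "Rinner e n x y = Rmod e (\<Sum>j<n. x j * y j)"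

definition Rdual :: "nat \<Rightarrow> nat \<Rightarrow> (nat \<Rightarrow> 'a::field poly) set \<Rightarrow> (nat \<Rightarrow> 'a poly) set" where
  "Rdual e n C = {y \<in> Rvecs e n. \<forall>x\<in>C. Rinner e n x y = 0}"

definition is_LCD :: "nat \<Rightarrow> nat \<Rightarrow> (nat \<Rightarrow> 'a::field poly) set \<Rightarrow> bool" where
  "is_LCD e n C \<longleftrightarrow> C \<inter> Rdual e n C = {(\<lambda>j. 0)}"

text \<open>The cyclic code <g> of length n over F_q, i.e. the ideal generated by g in
  F_q[x]/(x^n - 1), as a set of coefficient vectors (indexed 0..n-1, zero beyond).\<close>

definition cyclic_code :: "nat \<Rightarrow> 'a::field poly \<Rightarrow> (nat \<Rightarrow> 'a) set" where
  "cyclic_code n g = {(\<lambda>j. coeff ((f * g) mod (monom 1 n - 1)) j) | f. True}"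

definition code_R :: "nat \<Rightarrow> (nat \<Rightarrow> 'a::field) \<Rightarrow> nat \<Rightarrow> (nat \<Rightarrow> 'a poly) \<Rightarrow> (nat \<Rightarrow> 'a poly) set" where
  "code_R e \<alpha> n g = {(\<lambda>j. Rmod e (\<Sum>i=1..e. mu e \<alpha> i * [:s i j:])) | s.
      \<forall>i\<in>{1..e}. s i \<in> cyclic_code n (g i)}"

text \<open>Self-reciprocal: x^{deg g} g(1/x) (= reflect_poly g) is a nonzero scalar multiple of g.\<close>

definition self_reciprocal :: "'a::field poly \<Rightarrow> bool" where
  "self_reciprocal g \<longleftrightarrow> (\<exists>c. c \<noteq> 0 \<and> reflect_poly g = smult c g)"

end

theory Submission
  imports Defs
begin


definition rv :: "nat \<Rightarrow> 'a::field poly \<Rightarrow> 'a poly" where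
  "rv N p = (\<Sum>j\<le>N. monom (coeff p (N - j)) j)"

lemma coeff_rv: "coeff (rv N p) i = (if i \<le> N then coeff p (N - i) else 0)"
  unfolding rv_def by (simp add: coeff_sum coeff_monom)

lemma degree_rv: "degree (rv N p) \<le> N"
  by (rule degree_le) (simp add: coeff_rv)

lemma rv_rv: "degree p \<le> N \<Longrightarrow> rv N (rv N p) = p"
  by (rule poly_eqI) (auto simp: coeff_rv coeff_eq_0)

lemma rv_0[simp]: "rv N 0 = 0"
  by (rule poly_eqI) (simp add: coeff_rv)

lemma rv_eq_0: "degree p \<le> N \<Longrightarrow> rv N p = 0 \<longleftrightarrow> p = 0"
  by (metis rv_0 rv_rv)

lemma rv_reflect: "degree p \<le> N \<Longrightarrow> rv N p = monom 1 (N - degree p) * reflect_poly p"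
  by (rule poly_eqI) (auto simp: coeff_rv coeff_monom_mult coeff_reflect_poly coeff_eq_0)

lemma rv_mult:
  assumes "degree p \<le> N" "degree q \<le> M"
  shows "rv (N + M) (p * q) = rv N p * rv M q"
proof (cases "p = 0 \<or> q = 0")
  case True then show ?thesis by auto
next
  case False
  then have d: "degree (p * q) = degree p + degree q" by (simp add: degree_mult_eq)
  have "rv (N + M) (p * q) = monom 1 (N + M - (degree p + degree q)) * (reflect_poly p * reflect_poly q)"
    using rv_reflect[of "p*q" "N+M"] assms d by (simp add: reflect_poly_mult)
  also have "\<dots> = (monom 1 (N - degree p) * reflect_poly p) * (monom 1 (M - degree q) * reflect_poly q)"
    using assms by (simp add: mult_monom algebra_simps)
  also have "\<dots> = rv N p * rv M q" using assms by (simp add: rv_reflect)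
  finally show ?thesis .
qed

lemma rv_degree: "rv (degree p) p = reflect_poly p"
  by (simp add: rv_reflect)

lemma inner_rv:
  assumes "n \<ge> 1" "degree a < n" "degree b < n"
  shows "coeff (a * rv (n-1) b) (n-1) = (\<Sum>j<n. coeff a j * coeff b j)"
proof -
  have "coeff (a * rv (n-1) b) (n-1) = (\<Sum>i\<le>n-1. coeff a i * coeff (rv (n-1) b) (n-1-i))"
    by (rule coeff_mult)
  also have "\<dots> = (\<Sum>i\<le>n-1. coeff a i * coeff b i)"
  proof (rule sum.cong)
    fix i assume "i \<in> {..n-1}"
    then have "n - 1 - (n - 1 - i) = i" by auto
    then show "coeff a i * coeff (rv (n-1) b) (n-1-i) = coeff a i * coeff b i"
      by (simp add: coeff_rv)
  qed simp
  also have "{..n-1} = {..<n}" using assms by auto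
  finally show ?thesis .
qed

lemma degX: "n \<ge> 1 \<Longrightarrow> degree (monom (1::'a::field) n - 1) = n"
proof -
  assume n: "n \<ge> 1"
  have "monom (1::'a) n - 1 = monom 1 n + (-1)" by simp
  also have "degree \<dots> = n" using n by (subst degree_add_eq_left) (auto simp: degree_monom_eq)
  finally show ?thesis .
qed

lemma coeffX: "coeff (monom (1::'a::field) n - 1) j = (if j = n then 1 else 0) - (if j = 0 then 1 else 0)"
  by (simp add: coeff_monom)

lemma reflectX: "n \<ge> 1 \<Longrightarrow> reflect_poly (monom (1::'a::field) n - 1) = -(monom 1 n - 1)"
  by (rule poly_eqI) (auto simp: coeff_reflect_poly degX coeffX)

lemma coeffM:
  fixes w :: "'a::field poly"
  assumes "n \<ge> 1" "X = monom 1 n - 1" "X dvd w" "degree w < 2*n - 1"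
  shows "coeff w (n-1) = 0"
proof -
  obtain s where w: "w = X * s" using assms(3) by auto
  show ?thesis
  proof (cases "s = 0")
    case True then show ?thesis by (simp add: w)
  next
    case False
    have dX: "degree X = n" using assms(1,2) degX by simp
    have "X \<noteq> 0" using dX assms(1) by auto
    then have "degree w = n + degree s" using False dX by (simp add: w degree_mult_eq)
    then have "degree s < n - 1" using assms by simp
    then have "coeff s (n-1) = 0" by (simp add: coeff_eq_0)
    moreover have "coeff (monom 1 n * s) (n-1) = 0" using assms(1) by (simp add: coeff_monom_mult)
    ultimately show ?thesis by (simp add: w assms(2) left_diff_distrib)
  qed
qed



lemma degmod: "n \<ge> 1 \<Longrightarrow> X = monom (1::'a::field) n - 1 \<Longrightarrow> degree (p mod X) < n"
proof -
  assume n: "n \<ge> 1" and X: "X = monom (1::'a::field) n - 1"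
  have dX: "degree X = n" using n X degX by simp
  then have "X \<noteq> 0" using n by auto
  then show ?thesis using degree_mod_less[of X p] dX n by auto
qed

lemma perp:
  fixes g P :: "'a::field poly"
  assumes n: "n \<ge> 1" and X: "X = monom 1 n - 1" and dP: "degree P < n"
  shows "(\<forall>f'. (\<Sum>j<n. coeff ((f' * g) mod X) j * coeff P j) = 0) \<longleftrightarrow> X dvd g * rv (n-1) P"
proof
  assume H: "X dvd g * rv (n-1) P"
  show "\<forall>f'. (\<Sum>j<n. coeff ((f' * g) mod X) j * coeff P j) = 0"
  proof
    fix f'
    let ?a = "(f' * g) mod X"
    have "X dvd (f' * g - ?a)" by simp
    then have "X dvd (f' * g - ?a) * rv (n-1) P" by (rule dvd_mult2)
    moreover have "X dvd f' * (g * rv (n-1) P)" using H by (rule dvd_mult)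
    ultimately have "X dvd f' * (g * rv (n-1) P) - (f' * g - ?a) * rv (n-1) P" by (simp add: dvd_diff)
    also have "f' * (g * rv (n-1) P) - (f' * g - ?a) * rv (n-1) P = ?a * rv (n-1) P"
      by (simp add: algebra_simps)
    finally have dv: "X dvd ?a * rv (n-1) P" .
    have "degree (?a * rv (n-1) P) \<le> degree ?a + degree (rv (n-1) P)" by (rule degree_mult_le)
    moreover have "degree ?a < n" using degmod[OF n X] .
    moreover have "degree (rv (n-1) P) \<le> n - 1" by (rule degree_rv)
    ultimately have "degree (?a * rv (n-1) P) < 2*n - 1" using n by linarith
    then have "coeff (?a * rv (n-1) P) (n-1) = 0" using coeffM[OF n X dv] by simp
    then show "(\<Sum>j<n. coeff ?a j * coeff P j) = 0"
      using inner_rv[OF n degmod[OF n X] dP] by simp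
  qed
next
  assume H: "\<forall>f'. (\<Sum>j<n. coeff ((f' * g) mod X) j * coeff P j) = 0"
  define Q where "Q = (g * rv (n-1) P) mod X"
  have dQ: "degree Q < n" unfolding Q_def using degmod[OF n X] .
  have "coeff Q k = 0" for k
  proof (cases "k < n")
    case False then show ?thesis using dQ by (simp add: coeff_eq_0)
  next
    case True
    define m where "m = (monom 1 (n-1-k) :: 'a poly)"
    let ?a = "(m * g) mod X"
    have d1: "X dvd (m * g - ?a)" by simp
    have d2: "X dvd (g * rv (n-1) P - Q)" unfolding Q_def by simp
    have "X dvd (-(m * g - ?a) * rv (n-1) P + m * (g * rv (n-1) P - Q))"
    proof (rule dvd_add)
      show "X dvd (-(m * g - ?a)) * rv (n-1) P" by (rule dvd_mult2) (simp only: dvd_minus_iff d1)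
      show "X dvd m * (g * rv (n-1) P - Q)" by (rule dvd_mult) (rule d2)
    qed
    also have "-(m * g - ?a) * rv (n-1) P + m * (g * rv (n-1) P - Q) = ?a * rv (n-1) P - m * Q"
      by (simp add: algebra_simps)
    finally have dv: "X dvd ?a * rv (n-1) P - m * Q" .
    have "degree (?a * rv (n-1) P) \<le> degree ?a + degree (rv (n-1) P)" by (rule degree_mult_le)
    moreover have "degree ?a < n" using degmod[OF n X] .
    moreover have "degree (rv (n-1) P) \<le> n - 1" by (rule degree_rv)
    ultimately have e1: "degree (?a * rv (n-1) P) < 2*n - 1" using n by linarith
    have "degree (m * Q) \<le> degree m + degree Q" by (rule degree_mult_le)
    moreover have "degree m \<le> n - 1 - k" unfolding m_def by (simp add: degree_monom_le)
    ultimately have e2: "degree (m * Q) < 2*n - 1" using dQ n by linarith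
    have "degree (?a * rv (n-1) P - m * Q) < 2*n - 1"
      using e1 e2 by (rule degree_diff_less)
    then have "coeff (?a * rv (n-1) P - m * Q) (n-1) = 0" using coeffM[OF n X dv] by simp
    moreover have "coeff (?a * rv (n-1) P) (n-1) = 0"
      using inner_rv[OF n degmod[OF n X] dP] H by simp
    moreover have "coeff (m * Q) (n-1) = coeff Q k"
      using True unfolding m_def by (simp add: coeff_monom_mult)
    ultimately show ?thesis by simp
  qed
  then have "Q = 0" by (simp add: poly_eq_iff)
  then show "X dvd g * rv (n-1) P" unfolding Q_def by (simp add: mod_eq_0_iff_dvd)
qed




lemma bez_aux:
  fixes a b :: "'a::field poly"
  shows "k = (if b = 0 then 0 else Suc (degree b)) \<Longrightarrow>
    \<exists>u v. (u*a + v*b) dvd a \<and> (u*a + v*b) dvd b"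
proof (induction k arbitrary: a b rule: less_induct)
  case (less k)
  show ?case
  proof (cases "b = 0")
    case True then show ?thesis by (intro exI[of _ 1] exI[of _ 0]) simp
  next
    case False
    have "(if a mod b = 0 then 0 else Suc (degree (a mod b))) < k"
      using False less.prems degree_mod_less[OF False, of a] by auto
    from less.IH[OF this refl] obtain u v where
      uv: "(u*b + v*(a mod b)) dvd b" "(u*b + v*(a mod b)) dvd (a mod b)" by blast
    have e: "u*b + v*(a mod b) = v*a + (u - v*(a div b))*b"
      by (simp add: minus_div_mult_eq_mod[symmetric] algebra_simps) 
    have "a = (a div b) * b + a mod b" by simp
    then have "(u*b + v*(a mod b)) dvd a" using uv by (metis dvd_add dvd_mult)
    then show ?thesis using uv e by metis
  qed
qed

lemma bez:
  fixes a b :: "'a::field poly"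
  obtains u v where "(u*a + v*b) dvd a" "(u*a + v*b) dvd b"
  using bez_aux[OF refl] by blast

lemma sqf_dvd:
  fixes X a :: "'a::field poly"
  assumes sq: "\<forall>p. p^2 dvd X \<longrightarrow> p dvd 1" and X0: "X \<noteq> 0" and d: "X dvd a^2"
  shows "X dvd a"
proof -
  obtain u v where uv: "(u*X + v*a) dvd X" "(u*X + v*a) dvd a" by (rule bez)
  define D where "D = u*X + v*a"
  obtain X' where XD: "X = D * X'" using uv unfolding D_def by blast
  obtain a' where aD: "a = D * a'" using uv unfolding D_def by blast
  have D0: "D \<noteq> 0" using X0 XD by auto
  have "D * 1 = D * (u*X' + v*a')" using D_def XD aD by (simp add: algebra_simps)
  then have one: "u*X' + v*a' = 1" using D0 by (metis mult_left_cancel)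
  have "D * X' dvd D * (D * a'^2)" using d by (simp add: XD aD power2_eq_square algebra_simps)
  then have h1: "X' dvd D * a'^2" using D0 by simp
  have "D = D * (u*X' + v*a')^2" using one by simp
  also have "\<dots> = X' * (D * (u*u*X' + 2*u*v*a')) + (D * a'^2) * v^2"
    by (simp add: power2_eq_square algebra_simps)
  finally have "X' dvd D" using h1 by (metis dvd_add dvd_mult dvd_mult2 dvd_triv_left)
  then have "X'^2 dvd X" by (simp add: XD power2_eq_square mult.commute)
  then have "is_unit X'" using sq by blast
  then have "X dvd D" by (simp add: XD)
  also have "D dvd a" using aD by simp
  finally show ?thesis .
qed



lemma deg0_const: "degree (k::'a::field poly) = 0 \<Longrightarrow> k = [:coeff k 0:]"
  by (metis degree_eq_zeroE coeff_pCons_0)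

lemma YM:
  fixes g :: "'a::field poly"
  assumes n: "n \<ge> 1" and X: "X = monom 1 n - 1" and sq: "\<forall>p. p^2 dvd X \<longrightarrow> p dvd 1"
    and mon: "lead_coeff g = 1" and gX: "g dvd X"
  shows "(\<forall>P. (\<exists>f. P = (f*g) mod X) \<longrightarrow> X dvd g * rv (n-1) P \<longrightarrow> P = 0) \<longleftrightarrow> self_reciprocal g"
proof -
  have dX: "degree X = n" using n X degX by simp
  have X0: "X \<noteq> 0" using dX n by auto
  have g0: "g \<noteq> 0" using mon by auto
  obtain h where Xgh: "X = g * h" using gX by blast
  have h0: "h \<noteq> 0" using X0 Xgh by auto
  have cX: "coeff X 0 = -1" using n X by (simp add: coeffX)
  have cg: "coeff g 0 \<noteq> 0" and ch: "coeff h 0 \<noteq> 0" using cX Xgh coeff_mult_0[of g h] by auto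
  have dgh: "degree g + degree h = n" using dX Xgh g0 h0 by (simp add: degree_mult_eq)
  have rX: "reflect_poly g * reflect_poly h = - X"
  proof -
    have "reflect_poly g * reflect_poly h = reflect_poly X" by (simp add: Xgh reflect_poly_mult)
    also have "\<dots> = - X" using reflectX[OF n] X by simp
    finally show ?thesis .
  qed
  show ?thesis
  proof
    assume L: "\<forall>P. (\<exists>f. P = (f*g) mod X) \<longrightarrow> X dvd g * rv (n-1) P \<longrightarrow> P = 0"
    define rg where "rg = reflect_poly g"
    define rh where "rh = reflect_poly h"
    have drg: "degree rg = degree g" unfolding rg_def using cg by simp
    have drh: "degree rh = degree h" unfolding rh_def using ch by simp
    have rg0: "rg \<noteq> 0" and rh0: "rh \<noteq> 0" unfolding rg_def rh_def using g0 h0 by auto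
    obtain u v where uv: "(u*g + v*rh) dvd g" "(u*g + v*rh) dvd rh" by (rule bez)
    define d where "d = u*g + v*rh"
    have d0: "d \<noteq> 0" using uv g0 unfolding d_def by auto
    show "self_reciprocal g"
    proof (cases "degree d = 0")
      case True
      then have ud: "is_unit d" using d0 is_unit_iff_degree by blast
      have "g dvd rg * rh" using rX gX unfolding rg_def rh_def by simp
      then have "g dvd u * g * rg + v * (rg * rh)" by (simp add: dvd_add)
      also have "u * g * rg + v * (rg * rh) = rg * d" unfolding d_def by (simp add: algebra_simps)
      finally have "g dvd rg" using dvd_mult_unit_iff[OF ud] by blast
      then obtain k where k: "rg = g * k" by blast
      have k0: "k \<noteq> 0" using k rg0 by auto
      have "degree k = 0" using k drg g0 k0 by (simp add: degree_mult_eq)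
      then have "k = [:coeff k 0:]" by (rule deg0_const)
      then have "reflect_poly g = smult (coeff k 0) g" 
      proof -
        have "reflect_poly g = g * [:coeff k 0:]" using k \<open>k = _\<close> unfolding rg_def by simp
        then show ?thesis by simp
      qed
      moreover have "coeff k 0 \<noteq> 0" using k0 \<open>k = _\<close> by (metis pCons_0_0)
      ultimately show ?thesis unfolding self_reciprocal_def by blast
    next
      case False
      obtain g' where g': "g = d * g'" using uv unfolding d_def by blast
      obtain r' where r': "rh = d * r'" using uv unfolding d_def by blast
      have g'0: "g' \<noteq> 0" and r'0: "r' \<noteq> 0" using g0 rh0 g' r' by auto
      define P where "P = g * r'"
      have P2: "P = rh * g'" unfolding P_def using g' r' by (simp add: algebra_simps)
      have P0: "P \<noteq> 0" unfolding P_def using g0 r'0 by simp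
      have "degree rh = degree d + degree r'" using r' d0 r'0 by (simp add: degree_mult_eq)
      then have "degree r' < degree h" using False drh by simp
      then have dP: "degree P < n" unfolding P_def using g0 r'0 dgh by (simp add: degree_mult_eq)
      have "P = (r' * g) mod X" using mod_poly_less[of P X] dP dX unfolding P_def by (simp add: mult.commute)
      moreover have "X dvd g * rv (n-1) P"
      proof -
        have dg': "degree g' \<le> n - 1 - degree h"
          using dP P2 rh0 g'0 drh by (simp add: degree_mult_eq)
        have "n - 1 = degree h + (n - 1 - degree h)" using dgh dP P2 rh0 g'0 drh
          by (simp add: degree_mult_eq)
        then have "rv (n-1) P = rv (degree h + (n - 1 - degree h)) (rh * g')" using P2 by simp
        also have "\<dots> = rv (degree h) rh * rv (n - 1 - degree h) g'"
          using drh dg' by (intro rv_mult) auto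
        also have "rv (degree h) rh = h" using drh rv_degree[of rh] ch unfolding rh_def by simp
        finally have "g * rv (n-1) P = X * rv (n - 1 - degree h) g'" using Xgh by simp
        then show ?thesis by simp
      qed
      ultimately have "P = 0" using L by blast
      then show ?thesis using P0 by simp
    qed
  next
    assume "self_reciprocal g"
    then obtain c where c: "c \<noteq> 0" "reflect_poly g = smult c g" unfolding self_reciprocal_def by blast
    show "\<forall>P. (\<exists>f. P = (f*g) mod X) \<longrightarrow> X dvd g * rv (n-1) P \<longrightarrow> P = 0"
    proof (intro allI impI)
      fix P assume "\<exists>f. P = (f*g) mod X" and H: "X dvd g * rv (n-1) P"
      then obtain f where f: "P = (f*g) mod X" by blast
      have "g dvd P" unfolding f using gX by (simp add: dvd_mod_iff)
      then obtain w where w: "P = g * w" by blast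
      show "P = 0"
      proof (rule ccontr)
        assume P0: "P \<noteq> 0"
        then have w0: "w \<noteq> 0" using w by auto
        have dP: "degree P < n" unfolding f using degmod[OF n X] .
        then have dgw: "degree g + degree w < n" using w g0 w0 by (simp add: degree_mult_eq)
        have dw: "degree w \<le> n - 1 - degree g" using dgw by simp
        define w' where "w' = rv (n - 1 - degree g) w"
        have "n - 1 = degree g + (n - 1 - degree g)" using dgw by simp
        then have "rv (n-1) P = rv (degree g + (n - 1 - degree g)) (g * w)" using w by simp
        also have "\<dots> = rv (degree g) g * w'" unfolding w'_def using dw by (intro rv_mult) auto
        also have "rv (degree g) g = smult c g" using rv_degree[of g] c by simp
        finally have e: "g * rv (n-1) P = smult c (g * (g * w'))" by simp
        have "(g * w')^2 = smult c (g * (g * w')) * smult (inverse c) w'"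
          using c(1) by (simp add: power2_eq_square algebra_simps)
        moreover have "X dvd smult c (g * (g * w')) * smult (inverse c) w'" using H e by (intro dvd_mult2) simp
        ultimately have "X dvd (g * w')^2" by simp
        then have Xd: "X dvd g * w'" using sqf_dvd[OF sq X0] by blast
        have "degree w' \<le> n - 1 - degree g" unfolding w'_def by (rule degree_rv)
        then have "degree (g * w') \<le> n - 1" using degree_mult_le[of g w'] dgw by linarith
        then have "g * w' = 0" using Xd dX dvd_imp_degree_le[OF Xd] n by (cases "g * w' = 0") auto
        then have "w' = 0" using g0 by simp
        then have "w = 0" unfolding w'_def using rv_eq_0[OF dw] by simp
        then show False using w0 by simp
      qed
    qed
  qed
qed



lemma of_nat_card_0: "of_nat (card (UNIV :: 'a set)) = (0::'a::{field,finite})"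
proof -
  have "(\<Sum>x\<in>UNIV. x + 1) = (\<Sum>x\<in>UNIV. (x::'a))"
  proof -
    have "(\<Sum>x\<in>UNIV. x + 1) = (\<Sum>x\<in>(\<lambda>x. x + (1::'a)) ` UNIV. x)"
      by (subst sum.reindex) (auto simp: inj_on_def)
    also have "(\<lambda>x. x + (1::'a)) ` UNIV = UNIV"
      by (auto intro!: image_eqI[where x="_ - 1"])
    finally show ?thesis .
  qed
  then show ?thesis by (simp add: sum.distrib)
qed

lemma of_nat_ne0:
  assumes "coprime N (card (UNIV :: 'a set))"
  shows "of_nat N \<noteq> (0::'a::{field,finite})"
proof
  assume "of_nat N = (0::'a)"
  then have "CHAR('a) dvd N" by (simp add: of_nat_eq_0_iff_char_dvd)
  moreover have "CHAR('a) dvd card (UNIV :: 'a set)" using of_nat_card_0[where 'a='a] by (simp add: of_nat_eq_0_iff_char_dvd)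
  ultimately have "CHAR('a) dvd 1" using assms by (metis coprime_common_divisor)
  then show False by simp
qed

lemma sqfX:
  assumes N: "N \<ge> 1" and c: "of_nat N \<noteq> (0::'a::field)"
  shows "\<forall>p. p^2 dvd (monom (1::'a) N - 1) \<longrightarrow> p dvd 1"
proof (intro allI impI)
  fix p :: "'a poly" assume "p^2 dvd (monom 1 N - 1)"
  then obtain k where k0: "monom 1 N - 1 = p^2 * k" by (elim dvdE)
  then have k: "monom 1 N - 1 = p * (p * k)" by (simp add: power2_eq_square mult.assoc)
  have d1: "p dvd monom 1 N - 1" using k by simp
  have "pderiv (monom 1 N - 1) = p * pderiv (p * k) + (p * k) * pderiv p"
    by (simp only: k pderiv_mult)
  then have d2: "p dvd pderiv (monom (1::'a) N - 1)" by simp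
  have pd: "pderiv (monom (1::'a) N - 1) = monom (of_nat N) (N - 1)"
    by (simp add: pderiv_diff pderiv_monom)
  have "monom 1 1 * pderiv (monom (1::'a) N - 1) - smult (of_nat N) (monom 1 N - 1) = [:of_nat N:]"
    using N by (simp add: pd mult_monom smult_diff_right monom_0 smult_monom)
  moreover have "p dvd monom 1 1 * pderiv (monom (1::'a) N - 1) - smult (of_nat N) (monom 1 N - 1)"
    using d1 d2 by (intro dvd_diff dvd_mult) (auto simp: dvd_smult)
  ultimately have "p dvd [:of_nat N:]" by simp
  moreover have "is_unit [:(of_nat N :: 'a):]" using c by (simp add: is_unit_triv)
  ultimately show "p dvd 1" using dvd_unit_imp_unit by blast
qed

lemma distinct_roots:
  fixes \<alpha> :: "nat \<Rightarrow> 'a::field"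
  assumes e: "e \<ge> 1" and c: "of_nat e \<noteq> (0::'a)"
    and U: "ue1 e = (\<Prod>i=1..e. [:- \<alpha> i, 1:])"
  shows "inj_on \<alpha> {1..e}"
proof (rule inj_onI, rule ccontr)
  fix i j assume i: "i \<in> {1..e}" and j: "j \<in> {1..e}" and eq: "\<alpha> i = \<alpha> j" and ne: "i \<noteq> j"
  have "(\<Prod>l=1..e. [:- \<alpha> l, 1:]) = [:- \<alpha> i, 1:] * (\<Prod>l\<in>{1..e}-{i}. [:- \<alpha> l, 1:])"
    using i by (simp add: prod.remove)
  also have "(\<Prod>l\<in>{1..e}-{i}. [:- \<alpha> l, 1:]) = [:- \<alpha> j, 1:] * (\<Prod>l\<in>{1..e}-{i}-{j}. [:- \<alpha> l, 1:])"
    using j ne by (subst prod.remove[of _ j]) auto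
  finally have "ue1 e = [:- \<alpha> i, 1:]^2 * (\<Prod>l\<in>{1..e}-{i}-{j}. [:- \<alpha> l, 1:])"
    using U eq by (simp only: power2_eq_square mult.assoc)
  then have "[:- \<alpha> i, 1:]^2 dvd ue1 e" by (metis dvd_triv_left)
  then have "[:- \<alpha> i, 1:] dvd 1" using sqfX[OF e c] unfolding ue1_def by blast
  then have "degree [:- \<alpha> i, 1:] \<le> degree (1 :: 'a poly)" by (rule dvd_imp_degree_le) simp
  then show False by simp
qed



lemma root_ue1:
  assumes U: "ue1 e = (\<Prod>i=1..e. [:- \<alpha> i, 1:])" and k: "k \<in> {1..e}"
  shows "poly (ue1 e) (\<alpha> k) = 0"
  using k unfolding U poly_prod by (intro prod_zero) auto

lemma poly_Rmod:
  assumes U: "ue1 e = (\<Prod>i=1..e. [:- \<alpha> i, 1:])" and k: "k \<in> {1..e}"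
  shows "poly (Rmod e f) (\<alpha> k) = poly f (\<alpha> k)"
proof -
  have "f mod ue1 e = f - (f div ue1 e) * ue1 e" by (simp add: minus_div_mult_eq_mod)
  then show ?thesis unfolding Rmod_def using root_ue1[OF U k] by simp
qed

lemma Rmod_zero:
  fixes \<alpha> :: "nat \<Rightarrow> 'a::field"
  assumes e: "e \<ge> 1" and inj: "inj_on \<alpha> {1..e}" and U: "ue1 e = (\<Prod>i=1..e. [:- \<alpha> i, 1:])"
    and z: "\<forall>k\<in>{1..e}. poly f (\<alpha> k) = 0"
  shows "Rmod e f = 0"
proof (rule ccontr)
  assume r0: "Rmod e f \<noteq> 0"
  have "degree (Rmod e f) < e" unfolding Rmod_def ue1_def using degmod[OF e refl] .
  moreover have "\<alpha> ` {1..e} \<subseteq> {x. poly (Rmod e f) x = 0}"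
    using z poly_Rmod[OF U] by auto
  then have "card (\<alpha> ` {1..e}) \<le> card {x. poly (Rmod e f) x = 0}"
    using poly_roots_finite[OF r0] by (intro card_mono) auto
  moreover have "card (\<alpha> ` {1..e}) = e" using inj by (simp add: card_image)
  ultimately show False using card_poly_roots_bound[OF r0] by linarith
qed

lemma Rmod_zero_iff:
  fixes \<alpha> :: "nat \<Rightarrow> 'a::field"
  assumes e: "e \<ge> 1" and inj: "inj_on \<alpha> {1..e}" and U: "ue1 e = (\<Prod>i=1..e. [:- \<alpha> i, 1:])"
  shows "Rmod e f = 0 \<longleftrightarrow> (\<forall>k\<in>{1..e}. poly f (\<alpha> k) = 0)"
  using Rmod_zero[OF e inj U] poly_Rmod[OF U] by (metis poly_0)

lemma poly_mu:
  fixes \<alpha> :: "nat \<Rightarrow> 'a::field"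
  assumes e: "e \<ge> 1" and inj: "inj_on \<alpha> {1..e}" and U: "ue1 e = (\<Prod>i=1..e. [:- \<alpha> i, 1:])"
    and i: "i \<in> {1..e}" and k: "k \<in> {1..e}"
  shows "poly (mu e \<alpha> i) (\<alpha> k) = (if i = k then 1 else 0)"
proof -
  have G0: "Gpol \<alpha> i \<noteq> 0" unfolding Gpol_def by simp
  have "ue1 e = Gpol \<alpha> i * (\<Prod>l\<in>{1..e}-{i}. [:- \<alpha> l, 1:])"
    using i U unfolding Gpol_def by (simp add: prod.remove)
  then have Gh: "Ghat e \<alpha> i = (\<Prod>l\<in>{1..e}-{i}. [:- \<alpha> l, 1:])"
    unfolding Ghat_def using G0 by simp
  have pG: "poly (Ghat e \<alpha> i) (\<alpha> k) = (\<Prod>l\<in>{1..e}-{i}. \<alpha> k - \<alpha> l)"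
    unfolding Gh poly_prod by simp
  have Gi: "poly (Ghat e \<alpha> i) (\<alpha> i) \<noteq> 0"
  proof -
    have "\<forall>l\<in>{1..e}-{i}. \<alpha> i - \<alpha> l \<noteq> 0"
    proof
      fix l assume l: "l \<in> {1..e}-{i}"
      show "\<alpha> i - \<alpha> l \<noteq> 0"
      proof
        assume "\<alpha> i - \<alpha> l = 0"
        then have "\<alpha> i = \<alpha> l" by simp
        then have "i = l" using inj i l by (auto dest: inj_onD)
        then show False using l by simp
      qed
    qed
    then show ?thesis unfolding Gh poly_prod by (simp add: prod_zero_iff)
  qed
  have Gk: "poly (Ghat e \<alpha> i) (\<alpha> k) = 0" if "k \<noteq> i"
    unfolding pG using that k by (intro prod_zero) auto
  have ex: "\<exists>h z. z * Gpol \<alpha> i + h * Ghat e \<alpha> i = 1"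
  proof -
    define c where "c = poly (Ghat e \<alpha> i) (\<alpha> i)"
    define h where "h = [:inverse c:]"
    have "poly (1 - h * Ghat e \<alpha> i) (\<alpha> i) = 0" unfolding h_def c_def using Gi by simp
    then have "Gpol \<alpha> i dvd 1 - h * Ghat e \<alpha> i" unfolding Gpol_def by (subst (asm) poly_eq_0_iff_dvd)
    then obtain z where "1 - h * Ghat e \<alpha> i = Gpol \<alpha> i * z" by blast
    then have "z * Gpol \<alpha> i + h * Ghat e \<alpha> i = 1" by (simp add: algebra_simps)
    then show ?thesis by blast
  qed
  then have "\<exists>z. z * Gpol \<alpha> i + hpol e \<alpha> i * Ghat e \<alpha> i = 1"
    unfolding hpol_def by (rule someI_ex)
  then obtain z where z: "z * Gpol \<alpha> i + hpol e \<alpha> i * Ghat e \<alpha> i = 1" by blast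
  have "poly (mu e \<alpha> i) (\<alpha> k) = poly (hpol e \<alpha> i * Ghat e \<alpha> i) (\<alpha> k)"
    unfolding mu_def using poly_Rmod[OF U k] .
  also have "\<dots> = (if i = k then 1 else 0)"
  proof (cases "i = k")
    case True
    have "poly (z * Gpol \<alpha> i + hpol e \<alpha> i * Ghat e \<alpha> i) (\<alpha> i) = 1" using z by simp
    then show ?thesis using True unfolding Gpol_def by simp
  next
    case False then show ?thesis using Gk by simp
  qed
  finally show ?thesis .
qed

definition xs :: "nat \<Rightarrow> (nat \<Rightarrow> 'a::field) \<Rightarrow> (nat \<Rightarrow> nat \<Rightarrow> 'a) \<Rightarrow> nat \<Rightarrow> 'a poly" where
  "xs e \<alpha> s = (\<lambda>j. Rmod e (\<Sum>i=1..e. mu e \<alpha> i * [:s i j:]))"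

lemma poly_xs:
  fixes \<alpha> :: "nat \<Rightarrow> 'a::field"
  assumes e: "e \<ge> 1" and inj: "inj_on \<alpha> {1..e}" and U: "ue1 e = (\<Prod>i=1..e. [:- \<alpha> i, 1:])"
    and k: "k \<in> {1..e}"
  shows "poly (xs e \<alpha> s j) (\<alpha> k) = s k j"
proof -
  have "poly (xs e \<alpha> s j) (\<alpha> k) = (\<Sum>i=1..e. poly (mu e \<alpha> i) (\<alpha> k) * s i j)"
    unfolding xs_def poly_Rmod[OF U k] poly_sum by (simp add: mult.commute)
  also have "\<dots> = (\<Sum>i=1..e. if i = k then s i j else 0)"
    by (rule sum.cong) (auto simp: poly_mu[OF e inj U _ k])
  also have "\<dots> = s k j" using k by (simp add: sum.delta)
  finally show ?thesis .
qed

lemma code_R_eq: "code_R e \<alpha> n g = {xs e \<alpha> s | s. \<forall>i\<in>{1..e}. s i \<in> cyclic_code n (g i)}"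
  unfolding code_R_def xs_def by simp

lemma Rinner_zero_iff:
  fixes \<alpha> :: "nat \<Rightarrow> 'a::field"
  assumes e: "e \<ge> 1" and inj: "inj_on \<alpha> {1..e}" and U: "ue1 e = (\<Prod>i=1..e. [:- \<alpha> i, 1:])"
  shows "Rinner e n x y = 0 \<longleftrightarrow> (\<forall>k\<in>{1..e}. (\<Sum>j<n. poly (x j) (\<alpha> k) * poly (y j) (\<alpha> k)) = 0)"
  unfolding Rinner_def Rmod_zero_iff[OF e inj U] by (simp add: poly_sum)

lemma Rvecs_zero:
  fixes \<alpha> :: "nat \<Rightarrow> 'a::field"
  assumes e: "e \<ge> 1" and inj: "inj_on \<alpha> {1..e}" and U: "ue1 e = (\<Prod>i=1..e. [:- \<alpha> i, 1:])"
    and v: "v \<in> Rvecs e n" and z: "\<forall>k\<in>{1..e}. \<forall>j. poly (v j) (\<alpha> k) = 0"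
  shows "v = (\<lambda>j. 0)"
proof
  fix j
  have "v j = Rmod e (v j)" using v unfolding Rvecs_def by simp
  also have "\<dots> = 0" using Rmod_zero[OF e inj U] z by simp
  finally show "v j = 0" .
qed

lemma cyc_zero: "(\<lambda>j. 0) \<in> cyclic_code n g"
  unfolding cyclic_code_def by (rule CollectI, rule exI[of _ 0]) (simp add: fun_eq_iff)

lemma cyc_high:
  assumes "n \<ge> 1" "c \<in> cyclic_code n (g::'a::field poly)" "j \<ge> n"
  shows "c j = 0"
proof -
  obtain f where "c = (\<lambda>j. coeff ((f * g) mod (monom 1 n - 1)) j)"
    using assms(2) unfolding cyclic_code_def by blast
  then show ?thesis using degmod[OF assms(1) refl, of "f * g"] assms(3) by (simp add: coeff_eq_0)
qed

lemma xs_Rvecs: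
  assumes n: "n \<ge> 1" and s: "\<forall>i\<in>{1..e}. s i \<in> cyclic_code n (g i)"
  shows "xs e \<alpha> s \<in> Rvecs e n"
  unfolding Rvecs_def
proof (intro CollectI conjI allI impI)
  fix j show "Rmod e (xs e \<alpha> s j) = xs e \<alpha> s j" unfolding xs_def Rmod_def by simp
next
  fix j assume "n \<le> j"
  then have "\<forall>i\<in>{1..e}. s i j = 0" using cyc_high[OF n] s by blast
  then show "xs e \<alpha> s j = 0" unfolding xs_def Rmod_def by simp
qed



definition LCDk :: "nat \<Rightarrow> 'a::field poly \<Rightarrow> bool" where
  "LCDk n g' \<longleftrightarrow> (\<forall>c\<in>cyclic_code n g'. (\<forall>c'\<in>cyclic_code n g'. (\<Sum>j<n. c' j * c j) = 0) \<longrightarrow> c = (\<lambda>j. 0))"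

lemma LCDk_iff:
  fixes g :: "'a::field poly"
  assumes n: "n \<ge> 1" and X: "X = monom 1 n - 1"
  shows "LCDk n g \<longleftrightarrow> (\<forall>P. (\<exists>f. P = (f*g) mod X) \<longrightarrow> X dvd g * rv (n-1) P \<longrightarrow> P = 0)"
proof -
  have perp': "(\<forall>c'\<in>cyclic_code n g. (\<Sum>j<n. c' j * coeff P j) = 0) \<longleftrightarrow> X dvd g * rv (n-1) P"
    if "P = (f*g) mod X" for P f
  proof -
    have dP: "degree P < n" using that degmod[OF n X] by simp
    have "(\<forall>c'\<in>cyclic_code n g. (\<Sum>j<n. c' j * coeff P j) = 0) \<longleftrightarrow>
          (\<forall>f'. (\<Sum>j<n. coeff ((f' * g) mod X) j * coeff P j) = 0)"
      unfolding cyclic_code_def X by auto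
    also have "\<dots> \<longleftrightarrow> X dvd g * rv (n-1) P" by (rule perp[OF n X dP])
    finally show ?thesis .
  qed
  have z: "(\<lambda>j. coeff P j) = (\<lambda>j. 0) \<longleftrightarrow> P = 0" for P :: "'a poly"
    by (auto simp: fun_eq_iff poly_eq_iff)
  show ?thesis
  proof
    assume L: "LCDk n g"
    show "\<forall>P. (\<exists>f. P = (f*g) mod X) \<longrightarrow> X dvd g * rv (n-1) P \<longrightarrow> P = 0"
    proof (intro allI impI)
      fix P assume "\<exists>f. P = (f*g) mod X" and H: "X dvd g * rv (n-1) P"
      then obtain f where f: "P = (f*g) mod X" by blast
      have "(\<lambda>j. coeff P j) \<in> cyclic_code n g" unfolding cyclic_code_def X f by auto
      moreover have "\<forall>c'\<in>cyclic_code n g. (\<Sum>j<n. c' j * coeff P j) = 0" using perp'[OF f] H by blast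
      ultimately have "(\<lambda>j. coeff P j) = (\<lambda>j. 0)" using L unfolding LCDk_def by blast
      then show "P = 0" using z by blast
    qed
  next
    assume R: "\<forall>P. (\<exists>f. P = (f*g) mod X) \<longrightarrow> X dvd g * rv (n-1) P \<longrightarrow> P = 0"
    show "LCDk n g" unfolding LCDk_def
    proof (intro ballI impI)
      fix c assume "c \<in> cyclic_code n g" and H: "\<forall>c'\<in>cyclic_code n g. (\<Sum>j<n. c' j * c j) = 0"
      then obtain f where c: "c = (\<lambda>j. coeff ((f*g) mod X) j)" unfolding cyclic_code_def X by blast
      define P where "P = (f*g) mod X"
      have "X dvd g * rv (n-1) P" using perp'[OF P_def] H unfolding c P_def by simp
      then have "P = 0" using R P_def by blast
      then show "c = (\<lambda>j. 0)" unfolding c P_def[symmetric] by (simp add: fun_eq_iff)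
    qed
  qed
qed

lemma main_R:
  fixes \<alpha> :: "nat \<Rightarrow> 'a::field" and g :: "nat \<Rightarrow> 'a poly"
  assumes e: "e \<ge> 1" and inj: "inj_on \<alpha> {1..e}" and U: "ue1 e = (\<Prod>i=1..e. [:- \<alpha> i, 1:])"
    and n: "n \<ge> 1"
  shows "is_LCD e n (code_R e \<alpha> n g) \<longleftrightarrow> (\<forall>k\<in>{1..e}. LCDk n (g k))"
proof
  assume L: "is_LCD e n (code_R e \<alpha> n g)"
  show "\<forall>k\<in>{1..e}. LCDk n (g k)" unfolding LCDk_def
  proof (intro ballI impI)
    fix k c assume k: "k \<in> {1..e}" and c: "c \<in> cyclic_code n (g k)"
      and H: "\<forall>c'\<in>cyclic_code n (g k). (\<Sum>j<n. c' j * c j) = 0"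
    define s where "s = (\<lambda>i. if i = k then c else (\<lambda>j. 0))"
    have s: "\<forall>i\<in>{1..e}. s i \<in> cyclic_code n (g i)" unfolding s_def using c cyc_zero by auto
    have yC: "xs e \<alpha> s \<in> code_R e \<alpha> n g" unfolding code_R_eq using s by blast
    have "xs e \<alpha> s \<in> Rdual e n (code_R e \<alpha> n g)" unfolding Rdual_def
    proof (intro CollectI conjI ballI)
      show "xs e \<alpha> s \<in> Rvecs e n" by (rule xs_Rvecs[OF n s])
    next
      fix x assume "x \<in> code_R e \<alpha> n g"
      then obtain s' where x: "x = xs e \<alpha> s'" and s': "\<forall>i\<in>{1..e}. s' i \<in> cyclic_code n (g i)"
        unfolding code_R_eq by blast
      show "Rinner e n x (xs e \<alpha> s) = 0" unfolding Rinner_zero_iff[OF e inj U]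
      proof
        fix i assume i: "i \<in> {1..e}"
        show "(\<Sum>j<n. poly (x j) (\<alpha> i) * poly (xs e \<alpha> s j) (\<alpha> i)) = 0"
          unfolding x poly_xs[OF e inj U i] using H s' i unfolding s_def by auto
      qed
    qed
    with yC L have "xs e \<alpha> s = (\<lambda>j. 0)" unfolding is_LCD_def by blast
    then have "\<forall>j. poly (xs e \<alpha> s j) (\<alpha> k) = 0" by simp
    then show "c = (\<lambda>j. 0)" unfolding poly_xs[OF e inj U k] s_def by auto
  qed
next
  assume A: "\<forall>k\<in>{1..e}. LCDk n (g k)"
  show "is_LCD e n (code_R e \<alpha> n g)" unfolding is_LCD_def
  proof (rule equalityI)
    show "{\<lambda>j. 0} \<subseteq> code_R e \<alpha> n g \<inter> Rdual e n (code_R e \<alpha> n g)"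
    proof -
      have "(\<lambda>j. 0) = xs e \<alpha> (\<lambda>i j. 0)" unfolding xs_def Rmod_def by simp
      moreover have "\<forall>i\<in>{1..e}. (\<lambda>j. 0) \<in> cyclic_code n (g i)" using cyc_zero by blast
      ultimately have "(\<lambda>j. 0) \<in> code_R e \<alpha> n g" unfolding code_R_eq by blast
      moreover have "(\<lambda>j. 0) \<in> Rvecs e n" unfolding Rvecs_def Rmod_def by simp
      moreover have "Rinner e n x (\<lambda>j. 0) = 0" for x unfolding Rinner_def Rmod_def by simp
      ultimately show ?thesis unfolding Rdual_def by blast
    qed
  next
    show "code_R e \<alpha> n g \<inter> Rdual e n (code_R e \<alpha> n g) \<subseteq> {\<lambda>j. 0}"
    proof
      fix y assume y: "y \<in> code_R e \<alpha> n g \<inter> Rdual e n (code_R e \<alpha> n g)"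
      then obtain s where ys: "y = xs e \<alpha> s" and s: "\<forall>i\<in>{1..e}. s i \<in> cyclic_code n (g i)"
        unfolding code_R_eq by blast
      have yd: "y \<in> Rvecs e n" "\<forall>x\<in>code_R e \<alpha> n g. Rinner e n x y = 0"
        using y unfolding Rdual_def by auto
      have sk: "s k = (\<lambda>j. 0)" if k: "k \<in> {1..e}" for k
      proof -
        have "\<forall>c'\<in>cyclic_code n (g k). (\<Sum>j<n. c' j * s k j) = 0"
        proof
          fix c' assume c': "c' \<in> cyclic_code n (g k)"
          define s' where "s' = (\<lambda>i. if i = k then c' else (\<lambda>j. 0))"
          have "\<forall>i\<in>{1..e}. s' i \<in> cyclic_code n (g i)" unfolding s'_def using c' cyc_zero by auto
          then have "xs e \<alpha> s' \<in> code_R e \<alpha> n g" unfolding code_R_eq by blast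
          then have "Rinner e n (xs e \<alpha> s') y = 0" using yd by blast
          then have "(\<Sum>j<n. poly (xs e \<alpha> s' j) (\<alpha> k) * poly (y j) (\<alpha> k)) = 0"
            unfolding Rinner_zero_iff[OF e inj U] using k by blast
          then show "(\<Sum>j<n. c' j * s k j) = 0"
            unfolding ys poly_xs[OF e inj U k] s'_def by simp
        qed
        then show ?thesis using A k s unfolding LCDk_def by blast
      qed
      have "y = (\<lambda>j. 0)"
      proof (rule Rvecs_zero[OF e inj U yd(1)], intro ballI allI)
        fix k j assume k: "k \<in> {1..e}"
        show "poly (y j) (\<alpha> k) = 0" unfolding ys poly_xs[OF e inj U k] using sk[OF k] by simp
      qed
      then show "y \<in> {\<lambda>j. 0}" by simp
    qed
  qed
qed

theorem corollary4p6:
  fixes p m q e t n :: nat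
    and \<alpha> :: "nat \<Rightarrow> 'a::{field,finite}"
    and g :: "nat \<Rightarrow> 'a poly"
  assumes "prime p" and "odd p"
    and "q = p ^ m" and "card (UNIV :: 'a set) = q"
    and "q = e * t + 1" and "e \<ge> 2" and "t \<ge> 1"
    and "ue1 e = (\<Prod>i=1..e. [:- \<alpha> i, 1:])"
    and "coprime n q"
    and "\<forall>i\<in>{1..e}. lead_coeff (g i) = 1 \<and> g i dvd (monom 1 n - 1)"
  shows "is_LCD e n (code_R e \<alpha> n g) \<longleftrightarrow> (\<forall>i\<in>{1..e}. self_reciprocal (g i))"
proof -
  have e1: "e \<ge> 1" using assms(6) by simp
  have q3: "q \<noteq> 1" using assms(5,6,7) by simp
  have n1: "n \<ge> 1"
  proof (rule ccontr)
    assume "\<not> n \<ge> 1" then have "n = 0" by simp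
    then have "q = 1" using assms(9) by simp
    then show False using q3 by simp
  qed
  have cope: "coprime e q"
  proof (rule coprimeI)
    fix c assume "c dvd e" "c dvd q"
    then have "c dvd e * t" "c dvd e * t + 1" using assms(5) by auto
    then show "is_unit c" by (metis dvd_add_right_iff)
  qed
  have ce: "of_nat e \<noteq> (0::'a)" using of_nat_ne0[where 'a='a] cope assms(4) by simp
  have cn: "of_nat n \<noteq> (0::'a)" using of_nat_ne0[where 'a='a] assms(9) assms(4) by simp
  have inj: "inj_on \<alpha> {1..e}" by (rule distinct_roots[OF e1 ce assms(8)])
  have sq: "\<forall>p. p^2 dvd (monom (1::'a) n - 1) \<longrightarrow> p dvd 1" by (rule sqfX[OF n1 cn])
  have "is_LCD e n (code_R e \<alpha> n g) \<longleftrightarrow> (\<forall>k\<in>{1..e}. LCDk n (g k))" by (rule main_R[OF e1 inj assms(8) n1])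
  also have "\<dots> \<longleftrightarrow> (\<forall>i\<in>{1..e}. self_reciprocal (g i))"
  proof (intro ball_cong refl)
    fix i assume "i \<in> {1..e}"
    then have gi: "lead_coeff (g i) = 1" "g i dvd (monom 1 n - 1)" using assms(10) by auto
    show "LCDk n (g i) \<longleftrightarrow> self_reciprocal (g i)"
      using LCDk_iff[OF n1 refl, where g="g i"] YM[OF n1 refl sq gi] by (simp only:)
  qed
  finally show ?thesis .
qed


end
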